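(* Let $f(x)=\mathbb{E}_\xi f_\xi(x)$ where $f_\xi:\mathbb{R}^d\to\mathbb{R}$ is almost surely convex and $L$-smooth, let $x^*$ be the fixed optimum of the composite problem, and assume $\sigma_*^2:=\mathbb{E}_\xi\|\nabla f_\xi(x^* )-\nabla f(x^* )\|^2<+\infty$. Consider SGD, $v^t=\nabla f_{\xi^t}(x^t)$, where $\xi^t$ is a copy of $\xi$ independent of $x^t$ and of the past, run for at most $t_0$ iterations. Then it satisfies part (a) of the gradient-estimator condition with $\eta_0=\frac1{4L}$, $\omega=1$ and $\mathcal M^t=2\eta^2(t_0-t)\sigma_*^2$ for $t=0,\dots,t_0$. If $f$ is strongly convex and $\sigma_*=0$, it satisfies part (b) with $\eta_0=\frac1{2L}$, $\omega=1$ and $\mathcal M^t=0$.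
   Context: $L$-smoothness: $h(x)\le h(y)+\langle\nabla h(y),x-y\rangle+\frac L2\|x-y\|^2$; $\mu$-strong convexity: $f(x)\ge f(y)+\langle\nabla f(y),x-y\rangle+\frac\mu2\|x-y\|^2$. Bregman divergence $D_f(x,y):=f(x)-f(y)-\langle\nabla f(y),x-y\rangle$. Gradient-estimator condition: with $w^t:=x^t-\eta v^t$, $w^*:=x^*-\eta\nabla f(x^* )$, there are $\eta_0>0$, $\omega>0$ and a nonnegative sequence $\{\mathcal M^t\}$ such that for any $\eta\le\eta_0$ and each $t$: (a) if $f$ is convex, $\mathbb{E}\|w^t-w^*\|^2+\mathcal M^{t+1}\le\mathbb{E}\|x^t-x^*\|^2-\omega\eta\mathbb{E}D_f(x^t,x^* )+\mathcal M^t$; (b) if $f$ is $\mu$-strongly convex, either $\mathcal M^t\equiv0$ or for some $\rho>0$, $\mathbb{E}\|w^t-w^*\|^2+\mathcal M^{t+1}\le(1-\omega\eta\mu)\mathbb{E}\|x^t-x^*\|^2+(1-\rho)\mathcal M^t$. In case (b) with $\mathcal M^t\equiv0$ this reads $\mathbb{E}\|w^t-w^*\|^2\le(1-\omega\eta\mu)\mathbb{E}\|x^t-x^*\|^2$. *)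

theory Defs
  imports "HOL-Probability.Probability"
begin

definition grad :: "('a::euclidean_space \<Rightarrow> real) \<Rightarrow> 'a \<Rightarrow> 'a" where
  "grad h x = (SOME g. (h has_derivative (\<lambda>v. inner g v)) (at x))"

definition L_smooth :: "real \<Rightarrow> ('a::euclidean_space \<Rightarrow> real) \<Rightarrow> bool" where
  "L_smooth L h \<longleftrightarrow> (\<forall>x. h differentiable (at x)) \<and>
     (\<forall>x y. h x \<le> h y + inner (grad h y) (x - y) + L / 2 * (norm (x - y))\<^sup>2)"

definition strongly_convex :: "real \<Rightarrow> ('a::euclidean_space \<Rightarrow> real) \<Rightarrow> bool" where
  "strongly_convex \<mu> h \<longleftrightarrow> \<mu> > 0 \<and> (\<forall>x. h differentiable (at x)) \<and>
     (\<forall>x y. h x \<ge> h y + inner (grad h y) (x - y) + \<mu> / 2 * (norm (x - y))\<^sup>2)"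

definition bregman :: "('a::euclidean_space \<Rightarrow> real) \<Rightarrow> 'a \<Rightarrow> 'a \<Rightarrow> real" where
  "bregman h x y = h x - h y - inner (grad h y) (x - y)"

end

theory Submission
  imports Defs
begin


lemma linear_inner_rep:
  fixes D :: "'a::euclidean_space \<Rightarrow> real"
  assumes "linear D"
  shows "D = (\<lambda>v. inner (\<Sum>b\<in>Basis. D b *\<^sub>R b) v)"
proof
  fix v
  have "D v = D (\<Sum>b\<in>Basis. (v \<bullet> b) *\<^sub>R b)" by (simp add: euclidean_representation)
  also have "\<dots> = (\<Sum>b\<in>Basis. (v \<bullet> b) * D b)"
    using assms by (simp add: linear_sum linear_scale)
  also have "\<dots> = inner (\<Sum>b\<in>Basis. D b *\<^sub>R b) v"
    by (simp add: inner_sum_right inner_commute mult.commute)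
  finally show "D v = inner (\<Sum>b\<in>Basis. D b *\<^sub>R b) v" .
qed

lemma grad_works:
  fixes h :: "'a::euclidean_space \<Rightarrow> real"
  assumes "h differentiable (at x)"
  shows "(h has_derivative (\<lambda>v. inner (grad h x) v)) (at x)"
proof -
  obtain D where D: "(h has_derivative D) (at x)" using assms unfolding differentiable_def by blast
  then have "linear D" using has_derivative_linear by blast
  then have "D = (\<lambda>v. inner (\<Sum>b\<in>Basis. D b *\<^sub>R b) v)" by (rule linear_inner_rep)
  with D have "\<exists>g. (h has_derivative (\<lambda>v. inner g v)) (at x)" by metis
  then show ?thesis unfolding grad_def by (rule someI_ex)
qed

lemma grad_unique:
  fixes h :: "'a::euclidean_space \<Rightarrow> real"
  assumes "(h has_derivative (\<lambda>v. inner g v)) (at x)"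
  shows "grad h x = g"
proof -
  have "h differentiable (at x)" using assms unfolding differentiable_def by blast
  from has_derivative_unique[OF grad_works[OF this] assms]
  have "(\<lambda>v. inner (grad h x) v) = (\<lambda>v. inner g v)" .
  then have "inner (grad h x - g) (grad h x - g) = 0"
    by (metis inner_diff_left diff_self)
  then show ?thesis by simp
qed

lemma convex_tangent:
  fixes h :: "'a::euclidean_space \<Rightarrow> real"
  assumes cv: "convex_on UNIV h" and d: "h differentiable (at y)"
  shows "h x \<ge> h y + inner (grad h y) (x - y)"
proof -
  define \<phi> where "\<phi> t = h (y + t *\<^sub>R (x - y))" for t :: real
  have "convex_on UNIV \<phi>"
  proof (rule convex_onI)
    fix t a b :: real assume "0 < t" "t < 1"
    have "y + ((1 - t) *\<^sub>R a + t *\<^sub>R b) *\<^sub>R (x - y) = (1 - t) *\<^sub>R (y + a *\<^sub>R (x - y)) + t *\<^sub>R (y + b *\<^sub>R (x - y))"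
      by (simp add: algebra_simps)
    then show "\<phi> ((1 - t) *\<^sub>R a + t *\<^sub>R b) \<le> (1 - t) * \<phi> a + t * \<phi> b"
      unfolding \<phi>_def using convex_onD[OF cv, of t] \<open>0 < t\<close> \<open>t < 1\<close> by simp
  qed simp
  have hd: "(h has_derivative (\<lambda>v. inner (grad h y) v)) (at (y + 0 *\<^sub>R (x - y)))"
    using grad_works[OF d] by simp
  have "((\<lambda>t. y + t *\<^sub>R (x - y)) has_derivative (\<lambda>t. t *\<^sub>R (x - y))) (at 0)"
    by (auto intro!: derivative_eq_intros)
  from has_derivative_compose[OF this hd]
  have "(\<phi> has_derivative (\<lambda>t. t * inner (grad h y) (x - y))) (at 0)"
    unfolding \<phi>_def by (simp add: o_def)
  then have "(\<phi> has_field_derivative inner (grad h y) (x - y)) (at 0 within UNIV)"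
    by (simp add: has_field_derivative_def mult.commute[of _ "inner (grad h y) (x - y)"])
  from convex_on_imp_above_tangent[OF \<open>convex_on UNIV \<phi>\<close> _ _ _ this, of 1]
  have "\<phi> 1 - \<phi> 0 \<ge> inner (grad h y) (x - y)" by simp
  then show ?thesis unfolding \<phi>_def by simp
qed




lemma coco_abs:
  fixes G :: "'a::real_inner \<Rightarrow> 'a" and h :: "'a \<Rightarrow> real"
  assumes L: "L > 0"
    and lo: "\<And>x y. h x \<ge> h y + inner (G y) (x - y)"
    and up: "\<And>x y. h x \<le> h y + inner (G y) (x - y) + L / 2 * (norm (x - y))\<^sup>2"
  shows "(norm (G x - G y))\<^sup>2 \<le> 2 * L * (h x - h y - inner (G y) (x - y))"
proof -
  define d where "d = G x - G y"
  define z where "z = x - (1 / L) *\<^sub>R d"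
  have 1: "h z \<ge> h y + inner (G y) (z - y)" by (rule lo)
  have 2: "h z \<le> h x + inner (G x) (z - x) + L / 2 * (norm (z - x))\<^sup>2" by (rule up)
  have zx: "z - x = - ((1 / L) *\<^sub>R d)" unfolding z_def by simp
  have n: "(norm (z - x))\<^sup>2 = (1 / L)^2 * (norm d)\<^sup>2"
    unfolding zx using L by (simp add: power_divide)
  have i: "inner (G x) (z - x) - inner (G y) (z - y) = inner (G y) (y - x) - (1 / L) * (norm d)\<^sup>2"
    unfolding zx d_def z_def by (simp add: inner_diff_left inner_diff_right power2_norm_eq_inner algebra_simps)
  have "h y \<le> h x + inner (G y) (y - x) - (1 / L) * (norm d)\<^sup>2 + L / 2 * ((1 / L)^2 * (norm d)\<^sup>2)"
    using 1 2 i unfolding n by linarith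
  also have "L / 2 * ((1 / L)^2 * (norm d)\<^sup>2) = (1 / (2 * L)) * (norm d)\<^sup>2"
    using L by (simp add: power2_eq_square field_simps)
  finally have "(1 / (2 * L)) * (norm d)\<^sup>2 \<le> h x - h y - inner (G y) (x - y)"
    by (simp add: inner_diff_right algebra_simps)
  then have "(norm d)\<^sup>2 \<le> 2 * L * (h x - h y - inner (G y) (x - y))"
    using L by (simp add: field_simps)
  then show ?thesis unfolding d_def .
qed

lemma good_facts:
  fixes h :: "'a::euclidean_space \<Rightarrow> real"
  assumes cv: "convex_on UNIV h" and sm: "L_smooth L h" and L: "L > 0"
  shows "bregman h x y \<ge> 0" "bregman h x y \<le> L / 2 * (norm (x - y))\<^sup>2"
    "(norm (grad h x - grad h y))\<^sup>2 \<le> 2 * L * bregman h x y"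
proof -
  have d: "\<And>x. h differentiable (at x)" using sm unfolding L_smooth_def by blast
  have lo: "\<And>x y. h x \<ge> h y + inner (grad h y) (x - y)" using convex_tangent[OF cv d] by blast
  have up: "\<And>x y. h x \<le> h y + inner (grad h y) (x - y) + L / 2 * (norm (x - y))\<^sup>2"
    using sm unfolding L_smooth_def by blast
  show "bregman h x y \<ge> 0" using lo[of y x] unfolding bregman_def by simp
  show "bregman h x y \<le> L / 2 * (norm (x - y))\<^sup>2" using up[of x y] unfolding bregman_def by simp
  show "(norm (grad h x - grad h y))\<^sup>2 \<le> 2 * L * bregman h x y"
    unfolding bregman_def by (rule coco_abs[OF L lo up])
qed




locale sgd_setup =
  fixes P :: "'s measure" and F :: "'s \<Rightarrow> 'a::euclidean_space \<Rightarrow> real" and f :: "'a \<Rightarrow> real"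
    and L :: real
  assumes P: "prob_space P"
    and F_meas: "(\<lambda>p. F (fst p) (snd p)) \<in> borel_measurable (P \<Otimes>\<^sub>M borel)"
    and G_meas: "(\<lambda>p. grad (F (fst p)) (snd p)) \<in> borel_measurable (P \<Otimes>\<^sub>M borel)"
    and F_convex: "AE s in P. convex_on UNIV (F s)"
    and F_smooth: "AE s in P. L_smooth L (F s)"
    and L_pos: "L > 0"
    and F_int: "\<And>x. integrable P (\<lambda>s. F s x)"
    and f_def: "\<And>x. f x = (\<integral>s. F s x \<partial>P)"
begin

sublocale prob_space P by (rule P)

lemma meas1[simp]: "measure P (space P) = 1" using P prob_space.prob_space by blast

lemma good: "AE s in P. \<forall>x y. bregman (F s) x y \<ge> 0 \<and> bregman (F s) x y \<le> L / 2 * (norm (x - y))\<^sup>2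
   \<and> (norm (grad (F s) x - grad (F s) y))\<^sup>2 \<le> 2 * L * bregman (F s) x y"
  using F_convex F_smooth
proof eventually_elim
  case (elim s)
  show ?case using good_facts[OF elim L_pos] by blast
qed

lemma Fx_meas[measurable]: "(\<lambda>s. F s x) \<in> borel_measurable P"
  using measurable_compose[OF measurable_Pair[OF measurable_ident_sets[OF refl] measurable_const[of x]] F_meas]
  by simp

lemma gx_meas[measurable]: "(\<lambda>s. grad (F s) x) \<in> borel_measurable P"
  using measurable_compose[OF measurable_Pair[OF measurable_ident_sets[OF refl] measurable_const[of x]] G_meas]
  by simp

lemma g_int: "integrable P (\<lambda>s. grad (F s) x)"
proof -
  have i: "integrable P (\<lambda>s. \<Sum>b\<in>Basis. \<bar>F s (x + b)\<bar> + \<bar>F s x\<bar> + L / 2)"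
    by (intro Bochner_Integration.integrable_sum Bochner_Integration.integrable_add integrable_abs F_int integrable_const)
  have "AE s in P. norm (grad (F s) x) \<le> norm (\<Sum>b\<in>Basis. \<bar>F s (x + b)\<bar> + \<bar>F s x\<bar> + L / 2)"
    using good
  proof eventually_elim
    case (elim s)
    have "\<bar>grad (F s) x \<bullet> b\<bar> \<le> \<bar>F s (x + b)\<bar> + \<bar>F s x\<bar> + L / 2" if b: "b \<in> Basis" for b
    proof -
      have "norm b = 1" using b by simp
      then have "0 \<le> bregman (F s) (x + b) x \<and> bregman (F s) (x + b) x \<le> L / 2"
        using elim[rule_format, of "x + b" x] by simp
      then show ?thesis unfolding bregman_def by (simp add: inner_commute) linarith
    qed
    then have "(\<Sum>b\<in>Basis. \<bar>grad (F s) x \<bullet> b\<bar>) \<le> (\<Sum>b\<in>Basis. \<bar>F s (x + b)\<bar> + \<bar>F s x\<bar> + L / 2)"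
      by (rule sum_mono)
    moreover have "norm (grad (F s) x) \<le> (\<Sum>b\<in>Basis. \<bar>grad (F s) x \<bullet> b\<bar>)" by (rule norm_le_l1)
    ultimately show ?case by simp
  qed
  then show ?thesis by (rule Bochner_Integration.integrable_bound[OF i gx_meas])
qed

lemma D_int: "integrable P (\<lambda>s. bregman (F s) x y)"
  unfolding bregman_def by (intro Bochner_Integration.integrable_diff F_int integrable_inner_left g_int)

lemma int_const[simp]: "(\<integral>s. (c::real) \<partial>P) = c"
  by simp

lemma D_integral: "(\<integral>s. bregman (F s) x y \<partial>P) = f x - f y - inner (\<integral>s. grad (F s) y \<partial>P) (x - y)"
proof -
  have i1: "integrable P (\<lambda>s. F s x - F s y)" using F_int by auto
  have i2: "integrable P (\<lambda>s. inner (grad (F s) y) (x - y))" using g_int by auto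
  have "(\<integral>s. bregman (F s) x y \<partial>P) = (\<integral>s. F s x - F s y \<partial>P) - (\<integral>s. inner (grad (F s) y) (x - y) \<partial>P)"
    unfolding bregman_def using Bochner_Integration.integral_diff[OF i1 i2] .
  also have "\<dots> = f x - f y - inner (\<integral>s. grad (F s) y \<partial>P) (x - y)"
    unfolding f_def using F_int g_int by simp
  finally show ?thesis .
qed

lemma f_deriv: "(f has_derivative (\<lambda>v. inner (\<integral>s. grad (F s) x \<partial>P) v)) (at x)"
  unfolding has_derivative_at_alt
proof (intro conjI allI impI)
  show "bounded_linear (\<lambda>v. inner (\<integral>s. grad (F s) x \<partial>P) v)" by (rule bounded_linear_inner_right)
  fix e :: real assume e: "e > 0"
  show "\<exists>d>0. \<forall>y. norm (y - x) < d \<longrightarrow>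
      norm (f y - f x - inner (\<integral>s. grad (F s) x \<partial>P) (y - x)) \<le> e * norm (y - x)"
  proof (intro exI[of _ "2 * e / L"] conjI allI impI)
    show "0 < 2 * e / L" using e L_pos by simp
    fix y assume y: "norm (y - x) < 2 * e / L"
    have eq: "f y - f x - inner (\<integral>s. grad (F s) x \<partial>P) (y - x) = (\<integral>s. bregman (F s) y x \<partial>P)"
      by (simp add: D_integral)
    have "(\<integral>s. bregman (F s) y x \<partial>P) \<ge> 0"
      using good by (intro integral_nonneg_AE) (auto elim: eventually_mono)
    moreover have "(\<integral>s. bregman (F s) y x \<partial>P) \<le> (\<integral>s. L / 2 * (norm (y - x))\<^sup>2 \<partial>P)"
      using good by (intro integral_mono_AE D_int) (auto elim: eventually_mono)
    moreover have "(\<integral>s. L / 2 * (norm (y - x))\<^sup>2 \<partial>P) = L / 2 * (norm (y - x))\<^sup>2"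
      by simp
    moreover have "L / 2 * (norm (y - x))\<^sup>2 \<le> e * norm (y - x)"
    proof -
      have "L / 2 * norm (y - x) \<le> e" using y L_pos by (simp add: field_simps)
      then have "(L / 2 * norm (y - x)) * norm (y - x) \<le> e * norm (y - x)"
        by (rule mult_right_mono) simp
      then show ?thesis by (simp add: power2_eq_square algebra_simps)
    qed
    ultimately show "norm (f y - f x - inner (\<integral>s. grad (F s) x \<partial>P) (y - x)) \<le> e * norm (y - x)"
      unfolding eq by simp
  qed
qed

lemma grad_f: "grad f x = (\<integral>s. grad (F s) x \<partial>P)"
  by (rule grad_unique[OF f_deriv])

lemma f_cont: "continuous_on UNIV f"
  by (metis continuous_at_imp_continuous_on has_derivative_continuous f_deriv)

lemma f_meas[measurable]: "f \<in> borel_measurable borel"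
  by (rule borel_measurable_continuous_onI[OF f_cont])

lemma Df_integral: "(\<integral>s. bregman (F s) x y \<partial>P) = bregman f x y"
  by (subst D_integral) (simp add: bregman_def grad_f)

lemma Df_nonneg: "bregman f x y \<ge> 0"
  unfolding Df_integral[symmetric] using good by (intro integral_nonneg_AE) (auto elim: eventually_mono)

lemma Df_le: "bregman f x y \<le> L / 2 * (norm (x - y))\<^sup>2"
proof -
  have "(\<integral>s. bregman (F s) x y \<partial>P) \<le> (\<integral>s. L / 2 * (norm (x - y))\<^sup>2 \<partial>P)"
    using good by (intro integral_mono_AE D_int) (auto elim: eventually_mono)
  then show ?thesis by (simp add: Df_integral)
qed

end



lemma (in prob_space) indep_distr_pair:
  assumes X: "X \<in> measurable M S" and Y: "Y \<in> measurable M T"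
    and sfS: "sigma_finite_measure (distr M S X)" and sfT: "sigma_finite_measure (distr M T Y)"
    and ind: "indep_set {X -` A \<inter> space M | A. A \<in> sets S} {Y -` B \<inter> space M | B. B \<in> sets T}"
  shows "distr M S X \<Otimes>\<^sub>M distr M T Y = distr M (S \<Otimes>\<^sub>M T) (\<lambda>x. (X x, Y x))"
proof (rule pair_measure_eqI[OF sfS sfT])
  have XY: "(\<lambda>x. (X x, Y x)) \<in> measurable M (S \<Otimes>\<^sub>M T)" using X Y by (rule measurable_Pair)
  show "sets (distr M S X \<Otimes>\<^sub>M distr M T Y) = sets (distr M (S \<Otimes>\<^sub>M T) (\<lambda>x. (X x, Y x)))" by simp
  fix A B assume A: "A \<in> sets (distr M S X)" and B: "B \<in> sets (distr M T Y)"
  have "emeasure (distr M (S \<Otimes>\<^sub>M T) (\<lambda>x. (X x, Y x))) (A \<times> B) = emeasure M ((\<lambda>x. (X x, Y x)) -` (A \<times> B) \<inter> space M)"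
    using A B by (intro emeasure_distr[OF XY]) auto
  also have "(\<lambda>x. (X x, Y x)) -` (A \<times> B) \<inter> space M = (X -` A \<inter> space M) \<inter> (Y -` B \<inter> space M)" by auto
  also have "emeasure M \<dots> = emeasure M (X -` A \<inter> space M) * emeasure M (Y -` B \<inter> space M)"
  proof -
    have "prob ((X -` A \<inter> space M) \<inter> (Y -` B \<inter> space M)) = prob (X -` A \<inter> space M) * prob (Y -` B \<inter> space M)"
      using A B by (intro indep_setD[OF ind]) auto
    then show ?thesis by (simp add: emeasure_eq_measure measure_nonneg ennreal_mult)
  qed
  also have "\<dots> = emeasure (distr M S X) A * emeasure (distr M T Y) B"
    using X Y A B by (simp add: emeasure_distr)
  finally show "emeasure (distr M S X) A * emeasure (distr M T Y) B = emeasure (distr M (S \<Otimes>\<^sub>M T) (\<lambda>x. (X x, Y x))) (A \<times> B)" by simp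
qed

context sgd_setup
begin

lemma inner_step:
  fixes k :: "'s \<Rightarrow> real" and R :: "'s \<Rightarrow> real"
  assumes k_nn: "\<And>s. k s \<ge> 0" and kR: "AE s in P. k s \<le> R s" and Rint: "integrable P R"
    and RB: "(\<integral>s. R s \<partial>P) \<le> B"
  shows "(\<integral>\<^sup>+s. ennreal (k s) \<partial>P) \<le> ennreal B" "0 \<le> B"
proof -
  have Rnn: "AE s in P. 0 \<le> R s" using kR by eventually_elim (use k_nn in \<open>auto intro: order_trans\<close>)
  have "(\<integral>\<^sup>+s. ennreal (k s) \<partial>P) \<le> (\<integral>\<^sup>+s. ennreal (R s) \<partial>P)"
    using kR by (intro nn_integral_mono_AE) (auto elim: eventually_mono intro: ennreal_leI)
  also have "\<dots> = ennreal (\<integral>s. R s \<partial>P)" by (rule nn_integral_eq_integral[OF Rint Rnn])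
  also have "\<dots> \<le> ennreal B" using RB by (rule ennreal_leI)
  finally show "(\<integral>\<^sup>+s. ennreal (k s) \<partial>P) \<le> ennreal B" .
  have "0 \<le> (\<integral>s. R s \<partial>P)" using Rnn by (rule integral_nonneg_AE)
  then show "0 \<le> B" using RB by simp
qed

lemma outer_step:
  fixes M :: "'w measure" and X :: "'w \<Rightarrow> 'a" and \<Xi> :: "'w \<Rightarrow> 's"
    and k :: "'a \<times> 's \<Rightarrow> real" and B :: "'a \<Rightarrow> real"
  assumes M: "prob_space M" and Xm: "X \<in> borel_measurable M" and \<Xi>m: "\<Xi> \<in> measurable M P"
    and dP: "distr M P \<Xi> = P"
    and ind: "prob_space.indep_set M {X -` A \<inter> space M | A. A \<in> sets borel} {\<Xi> -` B \<inter> space M | B. B \<in> sets P}"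
    and km: "k \<in> borel_measurable (borel \<Otimes>\<^sub>M P)" and k_nn: "\<And>z. k z \<ge> 0"
    and Bm: "B \<in> borel_measurable borel" and Bint: "integrable M (\<lambda>\<omega>. B (X \<omega>))"
    and kB: "\<And>x. (\<integral>\<^sup>+s. ennreal (k (x, s)) \<partial>P) \<le> ennreal (B x)" and B_nn: "\<And>x. B x \<ge> 0"
  shows "(\<integral>\<omega>. k (X \<omega>, \<Xi> \<omega>) \<partial>M) \<le> (\<integral>\<omega>. B (X \<omega>) \<partial>M)"
proof (rule integral_real_bounded)
  interpret Mp: prob_space M by (rule M)
  interpret Xd: prob_space "distr M borel X" by (rule Mp.prob_space_distr[OF Xm])
  have sfP: "sigma_finite_measure P" by unfold_locales
  have sfX: "sigma_finite_measure (distr M borel X)" by unfold_locales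
  have sfXi: "sigma_finite_measure (distr M P \<Xi>)" using sfP dP by simp
  have prod: "distr M (borel \<Otimes>\<^sub>M P) (\<lambda>\<omega>. (X \<omega>, \<Xi> \<omega>)) = distr M borel X \<Otimes>\<^sub>M P"
    using Mp.indep_distr_pair[OF Xm \<Xi>m sfX sfXi ind] dP by simp
  have XXi: "(\<lambda>\<omega>. (X \<omega>, \<Xi> \<omega>)) \<in> measurable M (borel \<Otimes>\<^sub>M P)" using Xm \<Xi>m by (rule measurable_Pair)
  have "(\<integral>\<^sup>+\<omega>. ennreal (k (X \<omega>, \<Xi> \<omega>)) \<partial>M) = (\<integral>\<^sup>+z. ennreal (k z) \<partial>distr M (borel \<Otimes>\<^sub>M P) (\<lambda>\<omega>. (X \<omega>, \<Xi> \<omega>)))"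
    using XXi km by (subst nn_integral_distr) auto
  also have "\<dots> = (\<integral>\<^sup>+z. ennreal (k z) \<partial>(distr M borel X \<Otimes>\<^sub>M P))" unfolding prod ..
  also have "\<dots> = (\<integral>\<^sup>+x. \<integral>\<^sup>+s. ennreal (k (x, s)) \<partial>P \<partial>distr M borel X)"
    using km by (subst sigma_finite_measure.nn_integral_fst[OF sfP, symmetric]) auto
  also have "\<dots> \<le> (\<integral>\<^sup>+x. ennreal (B x) \<partial>distr M borel X)"
    by (intro nn_integral_mono kB)
  also have "\<dots> = (\<integral>\<^sup>+\<omega>. ennreal (B (X \<omega>)) \<partial>M)"
    using Xm Bm by (subst nn_integral_distr) auto
  also have "\<dots> = ennreal (\<integral>\<omega>. B (X \<omega>) \<partial>M)"
    using Bint B_nn by (intro nn_integral_eq_integral) auto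
  finally show "(\<integral>\<^sup>+\<omega>. ennreal (k (X \<omega>, \<Xi> \<omega>)) \<partial>M) \<le> ennreal (\<integral>\<omega>. B (X \<omega>) \<partial>M)" .
  show "0 \<le> (\<integral>\<omega>. B (X \<omega>) \<partial>M)" using B_nn by (intro Bochner_Integration.integral_nonneg) auto
qed

end




lemma norm_sq_expand:
  fixes a b :: "'a::real_inner"
  shows "(norm (a - e *\<^sub>R b))\<^sup>2 = (norm a)\<^sup>2 - 2 * e * inner b a + e\<^sup>2 * (norm b)\<^sup>2"
  unfolding power2_norm_eq_inner
  by (simp add: inner_diff_left inner_diff_right inner_commute power2_eq_square algebra_simps)

lemma norm_sq_sum_le:
  fixes u v :: "'a::real_inner"
  shows "(norm (u + v))\<^sup>2 \<le> 2 * (norm u)\<^sup>2 + 2 * (norm v)\<^sup>2"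
proof -
  have "0 \<le> (norm (u - v))\<^sup>2" by simp
  then show ?thesis
    by (simp add: power2_norm_eq_inner inner_diff_left inner_diff_right inner_add_left inner_add_right inner_commute)
qed

lemma pw_a:
  fixes x xs gx gs c :: "'a::real_inner"
  assumes eta: "\<eta> > 0" and idt: "inner (gx - gs) (x - xs) = D1 + D2" and D2: "D2 \<ge> 0"
    and co: "(norm (gx - gs))\<^sup>2 \<le> 2 * L * D1"
  shows "(norm ((x - \<eta> *\<^sub>R gx) - (xs - \<eta> *\<^sub>R c)))\<^sup>2 \<le> (norm (x - xs))\<^sup>2 - (2 * \<eta> - 4 * L * \<eta>\<^sup>2) * D1
      - 2 * \<eta> * inner (gs - c) (x - xs) + 2 * \<eta>\<^sup>2 * (norm (gs - c))\<^sup>2"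
proof -
  have e: "(x - \<eta> *\<^sub>R gx) - (xs - \<eta> *\<^sub>R c) = (x - xs) - \<eta> *\<^sub>R (gx - c)" by (simp add: algebra_simps)
  have i: "inner (gx - c) (x - xs) = D1 + D2 + inner (gs - c) (x - xs)"
    using idt by (simp add: inner_diff_left)
  have "(norm (gx - c))\<^sup>2 \<le> 2 * (norm (gx - gs))\<^sup>2 + 2 * (norm (gs - c))\<^sup>2"
    using norm_sq_sum_le[of "gx - gs" "gs - c"] by simp
  also have "\<dots> \<le> 4 * L * D1 + 2 * (norm (gs - c))\<^sup>2" using co by linarith
  finally have "\<eta>\<^sup>2 * (norm (gx - c))\<^sup>2 \<le> \<eta>\<^sup>2 * (4 * L * D1 + 2 * (norm (gs - c))\<^sup>2)"
    by (rule mult_left_mono) simp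
  moreover have "2 * \<eta> * D2 \<ge> 0" using eta D2 by simp
  ultimately show ?thesis
    unfolding e norm_sq_expand i by (simp add: algebra_simps)
qed

lemma pw_b:
  fixes x xs gx gs :: "'a::real_inner"
  assumes eta: "\<eta> > 0" and idt: "inner (gx - gs) (x - xs) = D1 + D2"
    and co: "(norm (gx - gs))\<^sup>2 \<le> 2 * L * D1"
  shows "(norm ((x - \<eta> *\<^sub>R gx) - (xs - \<eta> *\<^sub>R gs)))\<^sup>2 \<le> (norm (x - xs))\<^sup>2 - (2 * \<eta> - 2 * L * \<eta>\<^sup>2) * D1
      - 2 * \<eta> * D2"
proof -
  have e: "(x - \<eta> *\<^sub>R gx) - (xs - \<eta> *\<^sub>R gs) = (x - xs) - \<eta> *\<^sub>R (gx - gs)" by (simp add: algebra_simps)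
  have "\<eta>\<^sup>2 * (norm (gx - gs))\<^sup>2 \<le> \<eta>\<^sup>2 * (2 * L * D1)" using co by (rule mult_left_mono) simp
  then show ?thesis
    unfolding e norm_sq_expand idt by (simp add: algebra_simps)
qed

lemma breg_sum:
  "inner (grad h x - grad h y) (x - y) = bregman h x y + bregman h y x"
  unfolding bregman_def by (simp add: inner_diff_left inner_diff_right inner_commute algebra_simps)




context sgd_setup
begin

lemma k_meas:
  "(\<lambda>z. (norm ((fst z - \<eta> *\<^sub>R grad (F (snd z)) (fst z)) - w))\<^sup>2) \<in> borel_measurable (borel \<Otimes>\<^sub>M P)"
proof -
  have [measurable]: "(\<lambda>z. grad (F (snd z)) (fst z)) \<in> borel_measurable (borel \<Otimes>\<^sub>M P)"
    using measurable_compose[OF measurable_Pair[OF measurable_snd measurable_fst] G_meas] by simp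
  show ?thesis by measurable
qed

lemma part_a:
  fixes M :: "'w measure" and X :: "'w \<Rightarrow> 'a" and \<Xi> :: "'w \<Rightarrow> 's"
  assumes sigma_fin: "integrable P (\<lambda>s. (norm (grad (F s) xs - grad f xs))\<^sup>2)"
    and eta: "0 < \<eta>" "\<eta> \<le> 1 / (4 * L)"
    and M: "prob_space M" and Xm: "X \<in> borel_measurable M" and \<Xi>m: "\<Xi> \<in> measurable M P"
    and dP: "distr M P \<Xi> = P"
    and ind: "prob_space.indep_set M {X -` A \<inter> space M | A. A \<in> sets borel} {\<Xi> -` B \<inter> space M | B. B \<in> sets P}"
    and Xint: "integrable M (\<lambda>\<omega>. (norm (X \<omega> - xs))\<^sup>2)"
  shows "(\<integral>\<omega>. (norm ((X \<omega> - \<eta> *\<^sub>R grad (F (\<Xi> \<omega>)) (X \<omega>)) - (xs - \<eta> *\<^sub>R grad f xs)))\<^sup>2 \<partial>M)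
     \<le> (\<integral>\<omega>. (norm (X \<omega> - xs))\<^sup>2 \<partial>M) - \<eta> * (\<integral>\<omega>. bregman f (X \<omega>) xs \<partial>M)
        + 2 * \<eta>\<^sup>2 * (\<integral>s. (norm (grad (F s) xs - grad f xs))\<^sup>2 \<partial>P)"
proof -
  interpret Mp: prob_space M by (rule M)
  define c where "c = grad f xs"
  define \<sigma>2 where "\<sigma>2 = (\<integral>s. (norm (grad (F s) xs - c))\<^sup>2 \<partial>P)"
  define k where "k z = (norm ((fst z - \<eta> *\<^sub>R grad (F (snd z)) (fst z)) - (xs - \<eta> *\<^sub>R c)))\<^sup>2" for z
  define B where "B x = (norm (x - xs))\<^sup>2 - \<eta> * bregman f x xs + 2 * \<eta>\<^sup>2 * \<sigma>2" for x
  have L4: "4 * L * \<eta> \<le> 1" using eta L_pos by (simp add: field_simps)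
  have inner: "(\<integral>\<^sup>+s. ennreal (k (x, s)) \<partial>P) \<le> ennreal (B x) \<and> 0 \<le> B x" for x
  proof -
    define R where "R s = (norm (x - xs))\<^sup>2 - (2 * \<eta> - 4 * L * \<eta>\<^sup>2) * bregman (F s) x xs
      - 2 * \<eta> * inner (grad (F s) xs - c) (x - xs) + 2 * \<eta>\<^sup>2 * (norm (grad (F s) xs - c))\<^sup>2" for s
    have kR: "AE s in P. k (x, s) \<le> R s"
      using good
    proof eventually_elim
      case (elim s)
      show ?case unfolding k_def R_def fst_conv snd_conv
        by (rule pw_a[OF eta(1) breg_sum]) (use elim in auto)
    qed
    have I1: "integrable P (\<lambda>s. bregman (F s) x xs)" by (rule D_int)
    have I2: "integrable P (\<lambda>s. inner (grad (F s) xs - c) (x - xs))"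
      using g_int by auto
    have I3: "integrable P (\<lambda>s. (norm (grad (F s) xs - c))\<^sup>2)" using sigma_fin unfolding c_def .
    have Rint: "integrable P R" unfolding R_def using I1 I2 I3 by auto
    have z: "(\<integral>s. inner (grad (F s) xs - c) (x - xs) \<partial>P) = 0"
    proof -
      have "(\<integral>s. inner (grad (F s) xs - c) (x - xs) \<partial>P) = inner (\<integral>s. grad (F s) xs - c \<partial>P) (x - xs)"
        using g_int by (intro integral_inner_left) auto
      also have "(\<integral>s. grad (F s) xs - c \<partial>P) = 0"
        using g_int by (simp add: c_def grad_f)
      finally show ?thesis by simp
    qed
    have "(\<integral>s. R s \<partial>P) = (norm (x - xs))\<^sup>2 - (2 * \<eta> - 4 * L * \<eta>\<^sup>2) * bregman f x xs
      - 2 * \<eta> * 0 + 2 * \<eta>\<^sup>2 * \<sigma>2"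
      unfolding R_def \<sigma>2_def using I1 I2 I3 by (simp add: Df_integral z[symmetric])
    also have "\<dots> \<le> B x"
    proof -
      have "\<eta> * (1 - 4 * L * \<eta>) * bregman f x xs \<ge> 0"
        using eta L4 Df_nonneg by simp
      then show ?thesis unfolding B_def by (simp add: power2_eq_square algebra_simps)
    qed
    finally have RB: "(\<integral>s. R s \<partial>P) \<le> B x" .
    have knn: "\<And>s. 0 \<le> k (x, s)" unfolding k_def by simp
    from inner_step[OF knn kR Rint RB] show ?thesis by blast
  qed
  have Dm: "(\<lambda>x. bregman f x xs) \<in> borel_measurable borel" unfolding bregman_def by measurable
  have Dint: "integrable M (\<lambda>\<omega>. bregman f (X \<omega>) xs)"
  proof (rule Bochner_Integration.integrable_bound)
    show "integrable M (\<lambda>\<omega>. L / 2 * (norm (X \<omega> - xs))\<^sup>2)" using Xint by simp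
    show "(\<lambda>\<omega>. bregman f (X \<omega>) xs) \<in> borel_measurable M" using Dm Xm by measurable
    show "AE \<omega> in M. norm (bregman f (X \<omega>) xs) \<le> norm (L / 2 * (norm (X \<omega> - xs))\<^sup>2)"
      using Df_nonneg Df_le L_pos by (intro AE_I2) simp
  qed
  have Bm: "B \<in> borel_measurable borel" unfolding B_def using Dm by measurable
  have Bint: "integrable M (\<lambda>\<omega>. B (X \<omega>))" unfolding B_def using Xint Dint by auto
  have "(\<integral>\<omega>. k (X \<omega>, \<Xi> \<omega>) \<partial>M) \<le> (\<integral>\<omega>. B (X \<omega>) \<partial>M)"
    by (rule outer_step[OF M Xm \<Xi>m dP ind _ _ Bm Bint]) (use inner k_meas in \<open>auto simp: k_def\<close>)
  also have "(\<integral>\<omega>. B (X \<omega>) \<partial>M) = (\<integral>\<omega>. (norm (X \<omega> - xs))\<^sup>2 \<partial>M) - \<eta> * (\<integral>\<omega>. bregman f (X \<omega>) xs \<partial>M)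
        + 2 * \<eta>\<^sup>2 * \<sigma>2"
    unfolding B_def using Xint Dint Mp.prob_space by simp
  finally show ?thesis unfolding k_def \<sigma>2_def c_def by simp
qed

lemma part_b:
  fixes M :: "'w measure" and X :: "'w \<Rightarrow> 'a" and \<Xi> :: "'w \<Rightarrow> 's"
  assumes sigma_fin: "integrable P (\<lambda>s. (norm (grad (F s) xs - grad f xs))\<^sup>2)"
    and sc: "strongly_convex \<mu> f" and s0: "(\<integral>s. (norm (grad (F s) xs - grad f xs))\<^sup>2 \<partial>P) = 0"
    and eta: "0 < \<eta>" "\<eta> \<le> 1 / (2 * L)"
    and M: "prob_space M" and Xm: "X \<in> borel_measurable M" and \<Xi>m: "\<Xi> \<in> measurable M P"
    and dP: "distr M P \<Xi> = P"
    and ind: "prob_space.indep_set M {X -` A \<inter> space M | A. A \<in> sets borel} {\<Xi> -` B \<inter> space M | B. B \<in> sets P}"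
    and Xint: "integrable M (\<lambda>\<omega>. (norm (X \<omega> - xs))\<^sup>2)"
  shows "(\<integral>\<omega>. (norm ((X \<omega> - \<eta> *\<^sub>R grad (F (\<Xi> \<omega>)) (X \<omega>)) - (xs - \<eta> *\<^sub>R grad f xs)))\<^sup>2 \<partial>M)
     \<le> (1 - \<eta> * \<mu>) * (\<integral>\<omega>. (norm (X \<omega> - xs))\<^sup>2 \<partial>M)"
proof -
  interpret Mp: prob_space M by (rule M)
  define c where "c = grad f xs"
  define k where "k z = (norm ((fst z - \<eta> *\<^sub>R grad (F (snd z)) (fst z)) - (xs - \<eta> *\<^sub>R c)))\<^sup>2" for z
  define B where "B x = (1 - \<eta> * \<mu>) * (norm (x - xs))\<^sup>2" for x
  have L2: "2 * L * \<eta> \<le> 1" using eta L_pos by (simp add: field_simps)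
  have gc: "AE s in P. grad (F s) xs = c"
  proof -
    have "AE s in P. (norm (grad (F s) xs - grad f xs))\<^sup>2 = 0"
      using integral_nonneg_eq_0_iff_AE[OF sigma_fin] s0 by simp
    then show ?thesis by eventually_elim (simp add: c_def)
  qed
  have inner: "(\<integral>\<^sup>+s. ennreal (k (x, s)) \<partial>P) \<le> ennreal (B x) \<and> 0 \<le> B x" for x
  proof -
    define R where "R s = (norm (x - xs))\<^sup>2 - (2 * \<eta> - 2 * L * \<eta>\<^sup>2) * bregman (F s) x xs
      - 2 * \<eta> * bregman (F s) xs x" for s
    have kR: "AE s in P. k (x, s) \<le> R s"
      using good gc
    proof eventually_elim
      case (elim s)
      show ?case unfolding k_def R_def fst_conv snd_conv elim(2)[symmetric]
        by (rule pw_b[OF eta(1) breg_sum]) (use elim in auto)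
    qed
    have Rint: "integrable P R" unfolding R_def using D_int by auto
    have "(\<integral>s. R s \<partial>P) = (norm (x - xs))\<^sup>2 - (2 * \<eta> - 2 * L * \<eta>\<^sup>2) * bregman f x xs
      - 2 * \<eta> * bregman f xs x"
      unfolding R_def using D_int by (simp add: Df_integral)
    also have "\<dots> \<le> B x"
    proof -
      have "\<eta> * (2 - 2 * L * \<eta>) * bregman f x xs \<ge> 0"
        using eta L2 Df_nonneg by simp
      moreover have "bregman f xs x \<ge> \<mu> / 2 * (norm (x - xs))\<^sup>2"
      proof -
        have "f xs \<ge> f x + inner (grad f x) (xs - x) + \<mu> / 2 * (norm (xs - x))\<^sup>2"
          using sc unfolding strongly_convex_def by blast
        then show ?thesis unfolding bregman_def by (simp add: norm_minus_commute)
      qed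
      ultimately have a: "\<eta> * (2 - 2 * L * \<eta>) * bregman f x xs \<ge> 0"
        and b: "\<eta> * (\<mu> / 2 * (norm (x - xs))\<^sup>2) \<le> \<eta> * bregman f xs x"
        using eta by (auto intro: mult_left_mono)
      show ?thesis unfolding B_def using a b
        by (simp add: power2_eq_square algebra_simps)
    qed
    finally have RB: "(\<integral>s. R s \<partial>P) \<le> B x" .
    have knn: "\<And>s. 0 \<le> k (x, s)" unfolding k_def by simp
    from inner_step[OF knn kR Rint RB] show ?thesis by blast
  qed
  have Bm: "B \<in> borel_measurable borel" unfolding B_def by measurable
  have Bint: "integrable M (\<lambda>\<omega>. B (X \<omega>))" unfolding B_def using Xint by auto
  have "(\<integral>\<omega>. k (X \<omega>, \<Xi> \<omega>) \<partial>M) \<le> (\<integral>\<omega>. B (X \<omega>) \<partial>M)"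
    by (rule outer_step[OF M Xm \<Xi>m dP ind _ _ Bm Bint]) (use inner k_meas in \<open>auto simp: k_def\<close>)
  also have "(\<integral>\<omega>. B (X \<omega>) \<partial>M) = (1 - \<eta> * \<mu>) * (\<integral>\<omega>. (norm (X \<omega> - xs))\<^sup>2 \<partial>M)"
    unfolding B_def by simp
  finally show ?thesis unfolding k_def c_def by simp
qed

end

theorem lemma3:
  fixes M :: "'w measure" and P :: "'s measure"
    and F :: "'s \<Rightarrow> 'a::euclidean_space \<Rightarrow> real" and f :: "'a \<Rightarrow> real"
    and \<psi> :: "'a \<Rightarrow> ereal" and xs :: 'a and L :: real and t0 :: nat
  assumes M: "prob_space M" and P: "prob_space P"
    and F_meas: "(\<lambda>p. F (fst p) (snd p)) \<in> borel_measurable (P \<Otimes>\<^sub>M borel)"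
    and G_meas: "(\<lambda>p. grad (F (fst p)) (snd p)) \<in> borel_measurable (P \<Otimes>\<^sub>M borel)"
    and F_convex: "AE s in P. convex_on UNIV (F s)"
    and F_smooth: "AE s in P. L_smooth L (F s)"
    and L_pos: "L > 0"
    and F_int: "\<And>x. integrable P (\<lambda>s. F s x)"
    and f_def: "\<And>x. f x = (\<integral>s. F s x \<partial>P)"
    and f_diff: "f differentiable (at xs)"
    and xs_opt: "\<And>x. ereal (f xs) + \<psi> xs \<le> ereal (f x) + \<psi> x"
    and sigma_fin: "integrable P (\<lambda>s. (norm (grad (F s) xs - grad f xs))\<^sup>2)"
  shows
   "(\<forall>\<eta> (X :: 'w \<Rightarrow> 'a) (\<Xi> :: 'w \<Rightarrow> 's) (t :: nat).
       0 < \<eta> \<and> \<eta> \<le> 1 / (4 * L) \<and> t < t0 \<and>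
       X \<in> borel_measurable M \<and> \<Xi> \<in> measurable M P \<and> distr M P \<Xi> = P \<and>
       prob_space.indep_set M {X -` A \<inter> space M | A. A \<in> sets borel} {\<Xi> -` B \<inter> space M | B. B \<in> sets P} \<and>
       integrable M (\<lambda>\<omega>. (norm (X \<omega> - xs))\<^sup>2)
     \<longrightarrow>
       (\<integral>\<omega>. (norm ((X \<omega> - \<eta> *\<^sub>R grad (F (\<Xi> \<omega>)) (X \<omega>)) - (xs - \<eta> *\<^sub>R grad f xs)))\<^sup>2 \<partial>M)
         + 2 * \<eta>\<^sup>2 * real (t0 - Suc t) * (\<integral>s. (norm (grad (F s) xs - grad f xs))\<^sup>2 \<partial>P)
       \<le> (\<integral>\<omega>. (norm (X \<omega> - xs))\<^sup>2 \<partial>M) - 1 * \<eta> * (\<integral>\<omega>. bregman f (X \<omega>) xs \<partial>M)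
         + 2 * \<eta>\<^sup>2 * real (t0 - t) * (\<integral>s. (norm (grad (F s) xs - grad f xs))\<^sup>2 \<partial>P))
    \<and>
    (\<forall>\<mu>. strongly_convex \<mu> f \<and> (\<integral>s. (norm (grad (F s) xs - grad f xs))\<^sup>2 \<partial>P) = 0 \<longrightarrow>
     (\<forall>\<eta> (X :: 'w \<Rightarrow> 'a) (\<Xi> :: 'w \<Rightarrow> 's).
       0 < \<eta> \<and> \<eta> \<le> 1 / (2 * L) \<and>
       X \<in> borel_measurable M \<and> \<Xi> \<in> measurable M P \<and> distr M P \<Xi> = P \<and>
       prob_space.indep_set M {X -` A \<inter> space M | A. A \<in> sets borel} {\<Xi> -` B \<inter> space M | B. B \<in> sets P} \<and>
       integrable M (\<lambda>\<omega>. (norm (X \<omega> - xs))\<^sup>2)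
     \<longrightarrow>
       (\<integral>\<omega>. (norm ((X \<omega> - \<eta> *\<^sub>R grad (F (\<Xi> \<omega>)) (X \<omega>)) - (xs - \<eta> *\<^sub>R grad f xs)))\<^sup>2 \<partial>M)
       \<le> (1 - 1 * \<eta> * \<mu>) * (\<integral>\<omega>. (norm (X \<omega> - xs))\<^sup>2 \<partial>M)))"
proof -
  interpret sgd_setup P F f L
    by (rule sgd_setup.intro[OF P F_meas G_meas F_convex F_smooth L_pos F_int f_def])
  show ?thesis
  proof (intro conjI allI impI)
    fix \<eta> :: real and X :: "'w \<Rightarrow> 'a" and \<Xi> :: "'w \<Rightarrow> 's" and t :: nat
    assume H: "0 < \<eta> \<and> \<eta> \<le> 1 / (4 * L) \<and> t < t0 \<and>
       X \<in> borel_measurable M \<and> \<Xi> \<in> measurable M P \<and> distr M P \<Xi> = P \<and>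
       prob_space.indep_set M {X -` A \<inter> space M | A. A \<in> sets borel} {\<Xi> -` B \<inter> space M | B. B \<in> sets P} \<and>
       integrable M (\<lambda>\<omega>. (norm (X \<omega> - xs))\<^sup>2)"
    then have a: "(\<integral>\<omega>. (norm ((X \<omega> - \<eta> *\<^sub>R grad (F (\<Xi> \<omega>)) (X \<omega>)) - (xs - \<eta> *\<^sub>R grad f xs)))\<^sup>2 \<partial>M)
     \<le> (\<integral>\<omega>. (norm (X \<omega> - xs))\<^sup>2 \<partial>M) - \<eta> * (\<integral>\<omega>. bregman f (X \<omega>) xs \<partial>M)
        + 2 * \<eta>\<^sup>2 * (\<integral>s. (norm (grad (F s) xs - grad f xs))\<^sup>2 \<partial>P)"
      using part_a[OF sigma_fin _ _ M] by blast
    from H have "real (t0 - t) = real (t0 - Suc t) + 1" by (simp add: of_nat_diff)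
    then show "(\<integral>\<omega>. (norm ((X \<omega> - \<eta> *\<^sub>R grad (F (\<Xi> \<omega>)) (X \<omega>)) - (xs - \<eta> *\<^sub>R grad f xs)))\<^sup>2 \<partial>M)
         + 2 * \<eta>\<^sup>2 * real (t0 - Suc t) * (\<integral>s. (norm (grad (F s) xs - grad f xs))\<^sup>2 \<partial>P)
       \<le> (\<integral>\<omega>. (norm (X \<omega> - xs))\<^sup>2 \<partial>M) - 1 * \<eta> * (\<integral>\<omega>. bregman f (X \<omega>) xs \<partial>M)
         + 2 * \<eta>\<^sup>2 * real (t0 - t) * (\<integral>s. (norm (grad (F s) xs - grad f xs))\<^sup>2 \<partial>P)"
      using a by (simp add: algebra_simps)
  next
    fix \<mu> :: real and \<eta> :: real and X :: "'w \<Rightarrow> 'a" and \<Xi> :: "'w \<Rightarrow> 's"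
    assume S: "strongly_convex \<mu> f \<and> (\<integral>s. (norm (grad (F s) xs - grad f xs))\<^sup>2 \<partial>P) = 0"
    assume H: "0 < \<eta> \<and> \<eta> \<le> 1 / (2 * L) \<and>
       X \<in> borel_measurable M \<and> \<Xi> \<in> measurable M P \<and> distr M P \<Xi> = P \<and>
       prob_space.indep_set M {X -` A \<inter> space M | A. A \<in> sets borel} {\<Xi> -` B \<inter> space M | B. B \<in> sets P} \<and>
       integrable M (\<lambda>\<omega>. (norm (X \<omega> - xs))\<^sup>2)"
    then show "(\<integral>\<omega>. (norm ((X \<omega> - \<eta> *\<^sub>R grad (F (\<Xi> \<omega>)) (X \<omega>)) - (xs - \<eta> *\<^sub>R grad f xs)))\<^sup>2 \<partial>M)
       \<le> (1 - 1 * \<eta> * \<mu>) * (\<integral>\<omega>. (norm (X \<omega> - xs))\<^sup>2 \<partial>M)"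
      using part_b[OF sigma_fin _ _ _ _ M] S by simp
  qed
qed

end
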